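(* Let $(X,d)$ be a geodesic space such that $\operatorname{Curv}_{loc}X\le 0$ and such that for every triangle $(a_1,a_2,a_3)$ in $X$ the circumradius is attained, i.e. there is $m\in X$ with $\max_i d(m,a_i)=r(a_1,a_2,a_3)$. If $(X,d)$ is a Busemann space, then $\operatorname{Curv} X\leq 0$.
   Context: A geodesic space is a metric space in which any two points $x,y$ are joined by a geodesic, i.e. a path $\gamma\colon[0,1]\to X$ with $\gamma(0)=x,\gamma(1)=y$ and $d(\gamma(s),\gamma(t))=d(x,y)|s-t|$. A geodesic space is Busemann if for all geodesics $\gamma,\eta\colon[0,1]\to X$ the function $t\mapsto d(\gamma(t),\eta(t))$ is convex. A triangle is a triple $(a_1,a_2,a_3)$ of points of $X$; a comparison triangle is a triple $(\bar a_1,\bar a_2,\bar a_3)$ in $\mathbb{R}^2$ with $\|\bar a_i-\bar a_j\|=d(a_i,a_j)$. The circumradius is $r(a_1,a_2,a_3)=\inf_{x\in X}\max_i d(x,a_i)$, and $r(\bar a_1,\bar a_2,\bar a_3)=\min_{x\in\mathbb{R}^2}\max_i\|x-\bar a_i\|$. $\operatorname{Curv}X\le0$ means $r(a_1,a_2,a_3)\le r(\bar a_1,\bar a_2,\bar a_3)$ for every triangle in $X$. $\operatorname{Curv}_{loc}X\le0$ means that every $x\in X$ has a neighborhood $U$ such that this inequality holds for all triangles with vertices in $U$. *)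

theory Defs
  imports "HOL-Analysis.Analysis"
begin

definition is_geodesic :: "(real \<Rightarrow> 'a::metric_space) \<Rightarrow> bool" where
  "is_geodesic g \<longleftrightarrow>
     (\<forall>s\<in>{0..1}. \<forall>t\<in>{0..1}. dist (g s) (g t) = dist (g 0) (g 1) * \<bar>s - t\<bar>)"

definition geodesic_space :: "'a::metric_space itself \<Rightarrow> bool" where
  "geodesic_space _ \<longleftrightarrow>
     (\<forall>x y::'a. \<exists>g. is_geodesic g \<and> g 0 = x \<and> g 1 = y)"

definition busemann_space :: "'a::metric_space itself \<Rightarrow> bool" where
  "busemann_space T \<longleftrightarrow> geodesic_space T \<and>
     (\<forall>g h :: real \<Rightarrow> 'a. is_geodesic g \<longrightarrow> is_geodesic h \<longrightarrow>
        convex_on {0..1} (\<lambda>t. dist (g t) (h t)))"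

definition circumradius :: "'a::metric_space \<Rightarrow> 'a \<Rightarrow> 'a \<Rightarrow> real" where
  "circumradius a1 a2 a3 = (INF x. max (dist x a1) (max (dist x a2) (dist x a3)))"

text \<open>Circumradius in the Euclidean plane (the minimum exists; we use Inf).\<close>
definition plane_circumradius :: "real^2 \<Rightarrow> real^2 \<Rightarrow> real^2 \<Rightarrow> real" where
  "plane_circumradius b1 b2 b3 = (INF x. max (dist x b1) (max (dist x b2) (dist x b3)))"

definition comparison_triangle :: "'a::metric_space \<Rightarrow> 'a \<Rightarrow> 'a \<Rightarrow> real^2 \<Rightarrow> real^2 \<Rightarrow> real^2 \<Rightarrow> bool" where
  "comparison_triangle a1 a2 a3 b1 b2 b3 \<longleftrightarrow>
     dist b1 b2 = dist a1 a2 \<and> dist b2 b3 = dist a2 a3 \<and> dist b1 b3 = dist a1 a3"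

definition circ_ineq :: "'a::metric_space \<Rightarrow> 'a \<Rightarrow> 'a \<Rightarrow> bool" where
  "circ_ineq a1 a2 a3 \<longleftrightarrow>
     (\<forall>b1 b2 b3. comparison_triangle a1 a2 a3 b1 b2 b3 \<longrightarrow>
        circumradius a1 a2 a3 \<le> plane_circumradius b1 b2 b3)"

definition curv_le0 :: "'a::metric_space itself \<Rightarrow> bool" where
  "curv_le0 _ \<longleftrightarrow> (\<forall>a1 a2 a3::'a. circ_ineq a1 a2 a3)"

definition curv_loc_le0 :: "'a::metric_space itself \<Rightarrow> bool" where
  "curv_loc_le0 _ \<longleftrightarrow> (\<forall>x::'a. \<exists>U. open U \<and> x \<in> U \<and>
     (\<forall>a1\<in>U. \<forall>a2\<in>U. \<forall>a3\<in>U. circ_ineq a1 a2 a3))"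

end

theory Submission
  imports Defs
begin

lemma dist_v2: "dist (vector [a,b] :: real^2) (vector [c,d]) = sqrt ((a-c)^2 + (b-d)^2)"
  by (simp add: dist_vec_def L2_set_def sum_2 dist_real_def power2_abs)

lemma plane_tri_exists:
  fixes c e a :: real
  assumes "0 \<le> c" "0 \<le> e" "0 \<le> a" "a \<le> c + e" "c \<le> a + e" "e \<le> c + a"
  shows "\<exists>b1 b2 b3::real^2. dist b1 b2 = c \<and> dist b2 b3 = a \<and> dist b1 b3 = e"
proof -
  define x where "x = (c^2 + e^2 - a^2) / (2*c)"
  define y where "y = sqrt (e^2 - x^2)"
  have xe: "x^2 \<le> e^2"
  proof (cases "c = 0")
    case True then show ?thesis by (simp add: x_def)
  next
    case False
    then have cp: "c > 0" using assms by auto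
    have u: "a^2 \<le> (c+e)^2" using assms by (intro power_mono) auto
    have ce: "\<bar>c - e\<bar> \<le> a" using assms by linarith
    have "\<bar>c - e\<bar>^2 \<le> a^2" using power_mono[OF ce abs_ge_zero] .
    then have l: "(c - e)^2 \<le> a^2" by simp
    have N: "\<bar>c^2 + e^2 - a^2\<bar> \<le> e * (2*c)"
      using u l unfolding abs_le_iff power2_eq_square by (simp add: algebra_simps)
    have "\<bar>x\<bar> = \<bar>c^2 + e^2 - a^2\<bar> / (2*c)" using cp by (simp add: x_def abs_divide)
    also have "\<dots> \<le> e" using N cp by (simp add: pos_divide_le_eq)
    finally have "\<bar>x\<bar> \<le> \<bar>e\<bar>" using assms(2) by simp
    then show ?thesis by (simp add: abs_le_square_iff)
  qed
  have yy: "y^2 = e^2 - x^2" using xe by (simp add: y_def)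
  have d13: "dist (vector [0,0] :: real^2) (vector [x,y]) = e"
    using yy assms by (simp add: dist_v2)
  have d12: "dist (vector [0,0] :: real^2) (vector [c,0]) = c"
    using assms by (simp add: dist_v2)
  have "(c - x)^2 + y^2 = a^2"
  proof (cases "c = 0")
    case True
    then have "a = e" using assms by auto
    then show ?thesis using True yy by (simp add: x_def)
  next
    case False
    have "(c - x)^2 + y^2 = c^2 - 2*c*x + e^2" using yy by (simp add: power2_eq_square algebra_simps)
    also have "2*c*x = c^2 + e^2 - a^2" using False by (simp add: x_def)
    finally show ?thesis by simp
  qed
  then have d23: "dist (vector [c,0] :: real^2) (vector [x,y]) = a"
    using assms by (simp add: dist_v2)
  show ?thesis using d12 d13 d23 by blast
qed

lemma quad_id0:
  fixes w1 w2 w3 :: "'a::real_inner"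
  assumes "l1 + l2 + l3 = 1"
  shows "l1 * (norm w1)^2 + l2 * (norm w2)^2 + l3 * (norm w3)^2
    - (l1*l2*(norm (w2-w1))^2 + l1*l3*(norm (w3-w1))^2 + l2*l3*(norm (w3-w2))^2)
    = (norm (l1 *\<^sub>R w1 + l2 *\<^sub>R w2 + l3 *\<^sub>R w3))^2"
proof -
  have l3: "l3 = 1 - l1 - l2" using assms by simp
  have c: "inner w2 w1 = inner w1 w2" "inner w3 w1 = inner w1 w3" "inner w3 w2 = inner w2 w3"
    by (simp_all add: inner_commute)
  show ?thesis unfolding l3 power2_norm_eq_inner
    by (simp only: inner_diff_left inner_diff_right inner_add_left inner_add_right
       inner_scaleR_left inner_scaleR_right c) (simp add: algebra_simps)
qed

lemma quad_id:
  fixes x b1 b2 b3 :: "'a::real_inner"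
  assumes "l1 + l2 + l3 = 1"
  shows "l1 * (norm (x-b1))^2 + l2 * (norm (x-b2))^2 + l3 * (norm (x-b3))^2
    - (l1*l2*(norm (b1-b2))^2 + l1*l3*(norm (b1-b3))^2 + l2*l3*(norm (b2-b3))^2)
    = (norm (l1 *\<^sub>R (x-b1) + l2 *\<^sub>R (x-b2) + l3 *\<^sub>R (x-b3)))^2"
proof -
  have "b1 - b2 = (x-b2) - (x-b1)" "b1 - b3 = (x-b3) - (x-b1)" "b2 - b3 = (x-b3) - (x-b2)"
    by (simp_all add: algebra_simps)
  then show ?thesis using quad_id0[OF assms, of "x-b1" "x-b2" "x-b3"] by simp
qed
definition good :: "'a::real_inner \<Rightarrow> 'a \<Rightarrow> 'a \<Rightarrow> real \<Rightarrow> bool" where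
  "good p1 p2 p3 R \<longleftrightarrow> (\<exists>c l1 l2 l3. l1 \<ge> 0 \<and> l2 \<ge> 0 \<and> l3 \<ge> 0 \<and> l1 + l2 + l3 = 1 \<and>
     c = l1 *\<^sub>R p1 + l2 *\<^sub>R p2 + l3 *\<^sub>R p3 \<and>
     norm (c - p1) \<le> R \<and> norm (c - p2) \<le> R \<and> norm (c - p3) \<le> R \<and>
     l1 * (norm (c - p1))^2 + l2 * (norm (c - p2))^2 + l3 * (norm (c - p3))^2 = R^2)"

lemma good_swap12: "good p1 p2 p3 R \<Longrightarrow> good p2 p1 p3 R"
  unfolding good_def
  apply (elim exE conjE)
  subgoal for c l1 l2 l3 by (rule exI[of _ c], rule exI[of _ l2], rule exI[of _ l1], rule exI[of _ l3]) auto
  done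

lemma good_swap23: "good p1 p2 p3 R \<Longrightarrow> good p1 p3 p2 R"
  unfolding good_def
  apply (elim exE conjE)
  subgoal for c l1 l2 l3 by (rule exI[of _ c], rule exI[of _ l1], rule exI[of _ l3], rule exI[of _ l2]) auto
  done

lemma good_obtuse:
  fixes p1 p2 p3 :: "'a::real_inner"
  assumes "inner (p2 - p1) (p3 - p1) \<le> 0"
  shows "good p1 p2 p3 (norm (p2 - p3) / 2)"
proof -
  define c where "c = (1/2) *\<^sub>R p2 + (1/2) *\<^sub>R p3"
  define u where "u = p2 - p1"
  define v where "v = p3 - p1"
  have hp: "p1 = (1/2) *\<^sub>R p1 + (1/2) *\<^sub>R p1" by (simp add: scaleR_left_distrib[symmetric])
  have c1: "c - p1 = (1/2) *\<^sub>R (u + v)"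
    by (subst (1) hp) (simp add: c_def u_def v_def algebra_simps)
  have d: "p2 - p3 = u - v" by (simp add: u_def v_def)
  have "(norm (u + v))^2 \<le> (norm (u - v))^2"
    using assms unfolding power2_norm_eq_inner u_def[symmetric] v_def[symmetric]
    by (simp add: inner_add_left inner_add_right inner_diff_left inner_diff_right inner_commute)
  then have "norm (u + v) \<le> norm (u - v)" by (simp add: power_mono_iff)
  then have n1: "norm (c - p1) \<le> norm (p2 - p3) / 2" unfolding c1 d by simp
  have hp2: "p2 = (1/2) *\<^sub>R p2 + (1/2) *\<^sub>R p2" by (simp add: scaleR_left_distrib[symmetric])
  have hp3: "p3 = (1/2) *\<^sub>R p3 + (1/2) *\<^sub>R p3" by (simp add: scaleR_left_distrib[symmetric])
  have c2: "c - p2 = (1/2) *\<^sub>R (p3 - p2)"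
  proof -
    have "c - p2 = (1/2) *\<^sub>R p2 + (1/2) *\<^sub>R p3 - ((1/2) *\<^sub>R p2 + (1/2) *\<^sub>R p2)"
      using hp2 by (simp add: c_def)
    then show ?thesis by (simp add: algebra_simps)
  qed
  have c3: "c - p3 = (1/2) *\<^sub>R (p2 - p3)"
  proof -
    have "c - p3 = (1/2) *\<^sub>R p2 + (1/2) *\<^sub>R p3 - ((1/2) *\<^sub>R p3 + (1/2) *\<^sub>R p3)"
      using hp3 by (simp add: c_def)
    then show ?thesis by (simp add: algebra_simps)
  qed
  have n2: "norm (c - p2) = norm (p2 - p3) / 2" unfolding c2 by (simp add: norm_minus_commute)
  have n3: "norm (c - p3) = norm (p2 - p3) / 2" unfolding c3 by simp
  have eq: "0 * (norm (c - p1))^2 + 1/2 * (norm (c - p2))^2 + 1/2 * (norm (c - p3))^2 = (norm (p2 - p3) / 2)^2"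
    unfolding n2 n3 by (simp add: power2_eq_square)
  have cf: "c = 0 *\<^sub>R p1 + (1/2) *\<^sub>R p2 + (1/2) *\<^sub>R p3" by (simp add: c_def)
  show ?thesis unfolding good_def
    apply (rule exI[of _ c], rule exI[of _ 0], rule exI[of _ "1/2"], rule exI[of _ "1/2"])
    by (intro conjI; (rule n1 | rule cf | rule eq | simp add: n2 n3))
qed

lemma good_acute:
  fixes p1 p2 p3 :: "'a::real_inner"
  assumes a1: "inner (p2 - p1) (p3 - p1) > 0"
    and a2: "inner (p1 - p2) (p3 - p2) > 0"
    and a3: "inner (p1 - p3) (p2 - p3) > 0"
  shows "\<exists>R. good p1 p2 p3 R"
proof -
  define u where "u = p2 - p1"
  define v where "v = p3 - p1"
  define uu where "uu = inner u u"
  define vv where "vv = inner v v"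
  define uv where "uv = inner u v"
  have h1: "uv > 0" using a1 by (simp add: uv_def u_def v_def)
  have h2: "uu > uv"
  proof -
    have "inner (p1 - p2) (p3 - p2) = inner (-u) (v - u)" by (simp add: u_def v_def algebra_simps)
    also have "\<dots> = uu - uv" by (simp add: uu_def uv_def inner_diff_right inner_commute)
    finally show ?thesis using a2 by simp
  qed
  have h3: "vv > uv"
  proof -
    have "inner (p1 - p3) (p2 - p3) = inner (-v) (u - v)" by (simp add: u_def v_def algebra_simps)
    also have "\<dots> = vv - uv" by (simp add: vv_def uv_def inner_diff_right inner_commute)
    finally show ?thesis using a3 by simp
  qed
  define D where "D = uu * vv - uv^2"
  have uu0: "uu > 0" using h1 h2 by simp
  have vv0: "vv > 0" using h1 h3 by simp
  have Dp: "D > 0"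
  proof -
    have "uv * uv < uu * vv" using mult_strict_mono[OF h2 h3] uu0 h1 by simp
    then show ?thesis by (simp add: D_def power2_eq_square)
  qed
  define \<alpha> where "\<alpha> = vv * (uu - uv) / (2 * D)"
  define \<beta> where "\<beta> = uu * (vv - uv) / (2 * D)"
  define w where "w = \<alpha> *\<^sub>R u + \<beta> *\<^sub>R v"
  define c where "c = p1 + w"
  have ap: "\<alpha> > 0" using Dp h2 vv0 by (simp add: \<alpha>_def)
  have bp: "\<beta> > 0" using Dp h3 uu0 by (simp add: \<beta>_def)
  have D0: "D \<noteq> 0" using Dp by simp
  have l1: "1 - \<alpha> - \<beta> = uv * (uu + vv - 2 * uv) / (2 * D)"
  proof -
    have "1 - \<alpha> - \<beta> = (2*D - vv * (uu - uv) - uu * (vv - uv)) / (2 * D)"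
      using D0 by (simp add: \<alpha>_def \<beta>_def diff_divide_distrib)
    also have "2*D - vv * (uu - uv) - uu * (vv - uv) = uv * (uu + vv - 2 * uv)"
      by (simp add: D_def power2_eq_square algebra_simps)
    finally show ?thesis .
  qed
  have l1p: "1 - \<alpha> - \<beta> \<ge> 0" unfolding l1 using Dp h1 h2 h3 by simp
  have wu: "inner w u = uu / 2"
  proof -
    have "inner w u = \<alpha> * uu + \<beta> * uv"
      by (simp add: w_def inner_add_left uu_def uv_def inner_commute[of v u])
    also have "\<dots> = (vv * (uu - uv) * uu + uu * (vv - uv) * uv) / (2 * D)"
      by (simp add: \<alpha>_def \<beta>_def add_divide_distrib)
    also have "vv * (uu - uv) * uu + uu * (vv - uv) * uv = uu * D"
      by (simp add: D_def power2_eq_square algebra_simps)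
    finally show ?thesis using D0 by simp
  qed
  have wv: "inner w v = vv / 2"
  proof -
    have "inner w v = \<alpha> * uv + \<beta> * vv"
      by (simp add: w_def inner_add_left vv_def uv_def)
    also have "\<dots> = (vv * (uu - uv) * uv + uu * (vv - uv) * vv) / (2 * D)"
      by (simp add: \<alpha>_def \<beta>_def add_divide_distrib)
    also have "vv * (uu - uv) * uv + uu * (vv - uv) * vv = vv * D"
      by (simp add: D_def power2_eq_square algebra_simps)
    finally show ?thesis using D0 by simp
  qed
  define R where "R = norm w"
  have e1: "norm (c - p1) = R" by (simp add: c_def R_def)
  have e2: "norm (c - p2) = R"
  proof -
    have "c - p2 = w - u" by (simp add: c_def u_def)
    then have "(norm (c - p2))^2 = (norm w)^2 - 2 * inner w u + uu"
      by (simp add: power2_norm_eq_inner inner_diff_left inner_diff_right uu_def inner_commute)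
    then have "(norm (c - p2))^2 = R^2" using wu by (simp add: R_def)
    then show ?thesis by (simp add: R_def power2_eq_iff_nonneg)
  qed
  have e3: "norm (c - p3) = R"
  proof -
    have "c - p3 = w - v" by (simp add: c_def v_def)
    then have "(norm (c - p3))^2 = (norm w)^2 - 2 * inner w v + vv"
      by (simp add: power2_norm_eq_inner inner_diff_left inner_diff_right vv_def inner_commute)
    then have "(norm (c - p3))^2 = R^2" using wv by (simp add: R_def)
    then show ?thesis by (simp add: R_def power2_eq_iff_nonneg)
  qed
  have cc: "c = (1 - \<alpha> - \<beta>) *\<^sub>R p1 + \<alpha> *\<^sub>R p2 + \<beta> *\<^sub>R p3"
    by (simp add: c_def w_def u_def v_def algebra_simps)
  have "good p1 p2 p3 R" unfolding good_def
    apply (rule exI[of _ c], rule exI[of _ "1 - \<alpha> - \<beta>"], rule exI[of _ \<alpha>], rule exI[of _ \<beta>])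
    using l1p ap bp cc e1 e2 e3 by (simp add: algebra_simps)
  then show ?thesis by blast
qed

lemma good_exists:
  fixes p1 p2 p3 :: "'a::real_inner"
  shows "\<exists>R. good p1 p2 p3 R"
proof (cases "inner (p2 - p1) (p3 - p1) \<le> 0")
  case True then show ?thesis using good_obtuse by blast
next
  case n1: False
  show ?thesis
  proof (cases "inner (p1 - p2) (p3 - p2) \<le> 0")
    case True then show ?thesis using good_obtuse[of p1 p2 p3] good_swap12 by blast
  next
    case n2: False
    show ?thesis
    proof (cases "inner (p1 - p3) (p2 - p3) \<le> 0")
      case True
      then have "good p3 p1 p2 (norm (p1 - p2) / 2)" using good_obtuse[of p1 p3 p2] by simp
      then show ?thesis using good_swap12 good_swap23 by blast
    next
      case False
      then show ?thesis using n1 n2 good_acute by (meson not_le)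
    qed
  qed
qed

lemma plane_mono:
  fixes p1 p2 p3 b1 b2 b3 :: "real^2"
  assumes t: "t > 0" and d12: "dist p1 p2 \<le> t * dist b1 b2"
    and d23: "dist p2 p3 \<le> t * dist b2 b3" and d13: "dist p1 p3 \<le> t * dist b1 b3"
  shows "plane_circumradius p1 p2 p3 \<le> t * plane_circumradius b1 b2 b3"
proof -
  obtain R where "good p1 p2 p3 R" using good_exists by blast
  then obtain c l1 l2 l3 where l: "l1 \<ge> 0" "l2 \<ge> 0" "l3 \<ge> 0" "l1 + l2 + l3 = 1"
    and cdef: "c = l1 *\<^sub>R p1 + l2 *\<^sub>R p2 + l3 *\<^sub>R p3"
    and n: "norm (c - p1) \<le> R" "norm (c - p2) \<le> R" "norm (c - p3) \<le> R"
    and s: "l1 * (norm (c - p1))^2 + l2 * (norm (c - p2))^2 + l3 * (norm (c - p3))^2 = R^2"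
    unfolding good_def by blast
  have R0: "R \<ge> 0" using n(1) norm_ge_zero[of "c - p1"] by linarith
  have bdd: "bdd_below (range (\<lambda>x. max (dist x q1) (max (dist x q2) (dist x q3))))"
    for q1 q2 q3 :: "real^2"
    by (rule bdd_belowI[of _ 0]) (auto simp: le_max_iff_disj)
  have up: "plane_circumradius p1 p2 p3 \<le> R"
    unfolding plane_circumradius_def
    by (rule cINF_lower2[OF bdd, of c]) (use n in \<open>auto simp: dist_norm\<close>)
  define Qp where "Qp = l1*l2*(norm (p1-p2))^2 + l1*l3*(norm (p1-p3))^2 + l2*l3*(norm (p2-p3))^2"
  define Qb where "Qb = l1*l2*(norm (b1-b2))^2 + l1*l3*(norm (b1-b3))^2 + l2*l3*(norm (b2-b3))^2"
  have QpR: "Qp = R^2"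
  proof -
    have z: "l1 *\<^sub>R (c-p1) + l2 *\<^sub>R (c-p2) + l3 *\<^sub>R (c-p3) = 0"
    proof -
      have "l1 *\<^sub>R (c-p1) + l2 *\<^sub>R (c-p2) + l3 *\<^sub>R (c-p3)
          = (l1 + l2 + l3) *\<^sub>R c - (l1 *\<^sub>R p1 + l2 *\<^sub>R p2 + l3 *\<^sub>R p3)"
        by (simp add: algebra_simps)
      then show ?thesis using l(4) cdef by simp
    qed
    show ?thesis using quad_id[OF l(4), of c p1 p2 p3] z s by (simp add: Qp_def)
  qed
  have sq: "(norm (pa - pb))^2 \<le> t^2 * (norm (ba - bb))^2"
    if "dist pa pb \<le> t * dist ba bb" for pa pb ba bb :: "real^2"
  proof -
    have "(norm (pa - pb))^2 \<le> (t * norm (ba - bb))^2"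
      using that by (intro power_mono) (auto simp: dist_norm)
    then show ?thesis by (simp add: power_mult_distrib)
  qed
  have QpQb: "Qp \<le> t^2 * Qb"
  proof -
    have "l1*l2*(norm (p1-p2))^2 \<le> l1*l2*(t^2 * (norm (b1-b2))^2)"
      using sq[OF d12] l by (intro mult_left_mono) auto
    moreover have "l1*l3*(norm (p1-p3))^2 \<le> l1*l3*(t^2 * (norm (b1-b3))^2)"
      using sq[OF d13] l by (intro mult_left_mono) auto
    moreover have "l2*l3*(norm (p2-p3))^2 \<le> l2*l3*(t^2 * (norm (b2-b3))^2)"
      using sq[OF d23] l by (intro mult_left_mono) auto
    ultimately show ?thesis unfolding Qp_def Qb_def by (simp add: algebra_simps)
  qed
  have key: "R / t \<le> max (dist x b1) (max (dist x b2) (dist x b3))" for x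
  proof -
    define M where "M = max (dist x b1) (max (dist x b2) (dist x b3))"
    have M0: "M \<ge> 0" by (simp add: M_def le_max_iff_disj)
    have e: "(norm (x - bi))^2 \<le> M^2" if "bi \<in> {b1, b2, b3}" for bi
    proof -
      have "norm (x - bi) \<le> M" using that by (auto simp: M_def dist_norm)
      then show ?thesis by (intro power_mono) auto
    qed
    have "Qb \<le> l1 * (norm (x-b1))^2 + l2 * (norm (x-b2))^2 + l3 * (norm (x-b3))^2"
      using quad_id[OF l(4), of x b1 b2 b3] unfolding Qb_def
      by (metis diff_ge_0_iff_ge zero_le_power2)
    also have "\<dots> \<le> l1 * M^2 + l2 * M^2 + l3 * M^2"
      using e l by (intro add_mono mult_left_mono) auto
    also have "\<dots> = (l1 + l2 + l3) * M^2" by (simp only: distrib_right)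
    also have "\<dots> = M^2" using l(4) by simp
    finally have "Qb \<le> M^2" .
    then have "t^2 * Qb \<le> t^2 * M^2" by (intro mult_left_mono) auto
    moreover have "(t * M)^2 = t^2 * M^2" by (simp only: power_mult_distrib)
    ultimately have "R^2 \<le> (t * M)^2" using QpR QpQb by linarith
    then have "R \<le> t * M" using power2_le_imp_le mult_nonneg_nonneg[OF less_imp_le[OF t] M0] by blast
    then have "R \<le> M * t" by (metis mult.commute)
    then have "R / t \<le> M" using pos_divide_le_eq[OF t] by blast
    then show ?thesis by (simp add: M_def)
  qed
  have "R / t \<le> plane_circumradius b1 b2 b3"
    unfolding plane_circumradius_def by (rule cINF_greatest) (auto intro: key)
  then have "R \<le> plane_circumradius b1 b2 b3 * t" using pos_divide_le_eq[OF t] by blast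
  then have "R \<le> t * plane_circumradius b1 b2 b3" by (metis mult.commute)
  then show ?thesis using up by linarith
qed

lemma geod_dist:
  assumes "is_geodesic g" "0 \<le> t" "t \<le> 1"
  shows "dist (g 0) (g t) = t * dist (g 0) (g 1)" "dist (g t) (g 1) = (1 - t) * dist (g 0) (g 1)"
proof -
  have h: "\<forall>s\<in>{0..1}. \<forall>u\<in>{0..1}. dist (g s) (g u) = dist (g 0) (g 1) * \<bar>s - u\<bar>"
    using assms(1) unfolding is_geodesic_def .
  have "dist (g 0) (g t) = dist (g 0) (g 1) * \<bar>0 - t\<bar>" using h[rule_format, of 0 t] assms(2,3) by simp
  then show "dist (g 0) (g t) = t * dist (g 0) (g 1)" using assms(2) by simp
  have "dist (g t) (g 1) = dist (g 0) (g 1) * \<bar>t - 1\<bar>" using h[rule_format, of t 1] assms(2,3) by simp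
  then show "dist (g t) (g 1) = (1 - t) * dist (g 0) (g 1)" using assms(3) by simp
qed

theorem mainTheorem5:
  assumes "geodesic_space TYPE('a::metric_space)"
    and "curv_loc_le0 TYPE('a)"
    and "\<forall>a1 a2 a3::'a. \<exists>m. max (dist m a1) (max (dist m a2) (dist m a3))
                              = circumradius a1 a2 a3"
    and "busemann_space TYPE('a)"
  shows "curv_le0 TYPE('a)"
  unfolding curv_le0_def circ_ineq_def
proof (intro allI impI)
  fix a1 a2 a3 :: 'a and b1 b2 b3 :: "real^2"
  assume cmp: "comparison_triangle a1 a2 a3 b1 b2 b3"
  define R where "R = circumradius a1 a2 a3"
  obtain m where hm0: "max (dist m a1) (max (dist m a2) (dist m a3)) = circumradius a1 a2 a3"
    using assms(3) by blast
  have hm: "max (dist m a1) (max (dist m a2) (dist m a3)) = R" using hm0 by (simp only: R_def)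
  have mR: "dist m a1 \<le> R" "dist m a2 \<le> R" "dist m a3 \<le> R"
    unfolding hm[symmetric] by simp_all
  have geo: "\<exists>g. is_geodesic g \<and> g 0 = x \<and> g 1 = y" for x y :: 'a
    using assms(1) unfolding geodesic_space_def by blast
  obtain g1 where g1: "is_geodesic g1" "g1 0 = m" "g1 1 = a1" using geo[of m a1] by auto
  obtain g2 where g2: "is_geodesic g2" "g2 0 = m" "g2 1 = a2" using geo[of m a2] by auto
  obtain g3 where g3: "is_geodesic g3" "g3 0 = m" "g3 1 = a3" using geo[of m a3] by auto
  obtain U where U: "open U" "m \<in> U" "\<forall>a1\<in>U. \<forall>a2\<in>U. \<forall>a3\<in>U. circ_ineq a1 a2 a3"
    using assms(2)[unfolded curv_loc_le0_def, rule_format, of m] by auto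
  obtain \<epsilon> where \<epsilon>: "\<epsilon> > 0" "ball m \<epsilon> \<subseteq> U" using open_contains_ball_eq[OF U(1)] U(2) by blast
  define K where "K = dist m a1 + dist m a2 + dist m a3 + 1"
  have K: "K > 0" by (simp add: K_def add_nonneg_pos)
  define t where "t = min 1 (\<epsilon> / (2 * K))"
  have t0: "t > 0" using \<epsilon> K by (simp add: t_def)
  have t1: "t \<le> 1" by (simp add: t_def)
  have tK: "t * K < \<epsilon>"
  proof -
    have "t * K \<le> \<epsilon> / (2 * K) * K" using K by (intro mult_right_mono) (auto simp: t_def)
    also have "\<dots> = \<epsilon> / 2" using K by simp
    finally show ?thesis using \<epsilon> by simp
  qed
  define a1' where "a1' = g1 t"
  define a2' where "a2' = g2 t"
  define a3' where "a3' = g3 t"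
  have near: "dist m (g t) = t * dist m a" "dist (g t) a = (1 - t) * dist m a"
    if "is_geodesic g" "g 0 = m" "g 1 = a" for g a
    using geod_dist[OF that(1), of t] t0 t1 that by auto
  have inU: "g t \<in> U" if "is_geodesic g" "g 0 = m" "g 1 = a" "dist m a \<le> K" for g a
  proof -
    have "dist m (g t) \<le> t * K" using near[OF that(1-3)] that(4) t0 by (simp add: mult_left_mono)
    then have "g t \<in> ball m \<epsilon>" using tK by simp
    then show ?thesis using \<epsilon> by blast
  qed
  have in1: "a1' \<in> U" unfolding a1'_def by (rule inU[OF g1]) (simp add: K_def)
  have in2: "a2' \<in> U" unfolding a2'_def by (rule inU[OF g2]) (simp add: K_def)
  have in3: "a3' \<in> U" unfolding a3'_def by (rule inU[OF g3]) (simp add: K_def)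
  have busem: "dist (g t) (h t) \<le> t * dist (g 1) (h 1)"
    if "is_geodesic g" "is_geodesic h" "g 0 = m" "h 0 = m" for g h
  proof -
    have cv: "convex_on {0..1} (\<lambda>s. dist (g s) (h s))"
      using assms(4) that unfolding busemann_space_def by blast
    have "dist (g ((1 - t) *\<^sub>R 0 + t *\<^sub>R 1)) (h ((1 - t) *\<^sub>R 0 + t *\<^sub>R 1))
        \<le> (1 - t) * dist (g 0) (h 0) + t * dist (g 1) (h 1)"
      using convex_onD[OF cv, of t 0 1] t0 t1 by simp
    then show ?thesis using that by simp
  qed
  have s12: "dist a1' a2' \<le> t * dist a1 a2" unfolding a1'_def a2'_def
    using busem[OF g1(1) g2(1) g1(2) g2(2)] g1 g2 by simp
  have s23: "dist a2' a3' \<le> t * dist a2 a3" unfolding a2'_def a3'_def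
    using busem[OF g2(1) g3(1) g2(2) g3(2)] g2 g3 by simp
  have s13: "dist a1' a3' \<le> t * dist a1 a3" unfolding a1'_def a3'_def
    using busem[OF g1(1) g3(1) g1(2) g3(2)] g1 g3 by simp
  have bddX: "bdd_below (range (\<lambda>x. max (dist x q1) (max (dist x q2) (dist x q3))))"
    for q1 q2 q3 :: 'a
    by (rule bdd_belowI[of _ 0]) (auto simp: le_max_iff_disj)
  have lowr: "t * R \<le> circumradius a1' a2' a3'"
    unfolding circumradius_def
  proof (rule cINF_greatest)
    show "UNIV \<noteq> {}" by simp
    fix x
    have RM: "R \<le> max (dist x a1) (max (dist x a2) (dist x a3))"
      unfolding R_def circumradius_def by (rule cINF_lower[OF bddX]) simp
    have "dist x a1 \<le> dist x a1' + (1 - t) * R"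
    proof -
      have "dist a1' a1 = (1 - t) * dist m a1" using near(2)[OF g1] unfolding a1'_def .
      also have "\<dots> \<le> (1 - t) * R" using mR t1 by (intro mult_left_mono) auto
      finally show ?thesis using dist_triangle[of x a1 a1'] by linarith
    qed
    moreover have "dist x a2 \<le> dist x a2' + (1 - t) * R"
    proof -
      have "dist a2' a2 = (1 - t) * dist m a2" using near(2)[OF g2] unfolding a2'_def .
      also have "\<dots> \<le> (1 - t) * R" using mR t1 by (intro mult_left_mono) auto
      finally show ?thesis using dist_triangle[of x a2 a2'] by linarith
    qed
    moreover have "dist x a3 \<le> dist x a3' + (1 - t) * R"
    proof -
      have "dist a3' a3 = (1 - t) * dist m a3" using near(2)[OF g3] unfolding a3'_def .
      also have "\<dots> \<le> (1 - t) * R" using mR t1 by (intro mult_left_mono) auto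
      finally show ?thesis using dist_triangle[of x a3 a3'] by linarith
    qed
    ultimately have "max (dist x a1) (max (dist x a2) (dist x a3))
        \<le> max (dist x a1') (max (dist x a2') (dist x a3')) + (1 - t) * R"
      by (intro max.boundedI; linarith?; simp add: le_max_iff_disj; linarith)
    moreover have "(1 - t) * R = R - t * R" by (simp add: algebra_simps)
    ultimately show "t * R \<le> max (dist x a1') (max (dist x a2') (dist x a3'))"
      using RM by linarith
  qed
  obtain c1 c2 c3 :: "real^2" where cc: "dist c1 c2 = dist a1' a2'" "dist c2 c3 = dist a2' a3'"
      "dist c1 c3 = dist a1' a3'"
  proof -
    have "dist a2' a3' \<le> dist a1' a2' + dist a1' a3'"
      using dist_triangle[of a2' a3' a1'] dist_commute[of a2' a1'] by linarith
    moreover have "dist a1' a2' \<le> dist a2' a3' + dist a1' a3'"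
      using dist_triangle[of a1' a2' a3'] dist_commute[of a3' a2'] by linarith
    moreover have "dist a1' a3' \<le> dist a1' a2' + dist a2' a3'"
      using dist_triangle[of a1' a3' a2'] by linarith
    ultimately show ?thesis
      using plane_tri_exists[of "dist a1' a2'" "dist a1' a3'" "dist a2' a3'"] that by force
  qed
  have ci: "circ_ineq a1' a2' a3'" using U(3) in1 in2 in3 by blast
  have ct: "comparison_triangle a1' a2' a3' c1 c2 c3" unfolding comparison_triangle_def using cc by simp
  have "circumradius a1' a2' a3' \<le> plane_circumradius c1 c2 c3"
    using ci ct unfolding circ_ineq_def by blast
  also have "\<dots> \<le> t * plane_circumradius b1 b2 b3"
    using cmp cc s12 s23 s13 unfolding comparison_triangle_def
    by (intro plane_mono[OF t0]) auto
  finally have "t * R \<le> t * plane_circumradius b1 b2 b3" using lowr by linarith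
  then show "circumradius a1 a2 a3 \<le> plane_circumradius b1 b2 b3" using t0 R_def by simp
qed

end
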